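(* Let $\mu$ be a $(C,\gamma)$-absolutely decaying measure on $\mathbb{R}^n$ with $K=\operatorname{supp}\mu$, let $0<\alpha<\frac{1}{2C^{1/\gamma}+1}$, let $S\subset\mathbb{R}^n$ be $\alpha$-winning on $K$, and let $S'\subset S$ be a countable union of affine hyperplanes (intersected with $S$). Then $S\setminus S'$ is $\alpha$-winning on $K$.
   Context: For a closed set $K\subset\mathbb{R}^n$ and $0<\alpha,\beta<1$, Schmidt's $(\alpha,\beta)$-game on $K$ with target set $S$: balls are $B(\mathbf{x},\rho)=\{\mathbf{x}'\in K: d(\mathbf{x},\mathbf{x}')\le\rho\}$ with $\mathbf{x}\in K$, $\rho>0$ ($d$ Euclidean), and $(\mathbf{x}_2,\rho_2)\le_s(\mathbf{x}_1,\rho_1)$ means $\rho_2+d(\mathbf{x}_1,\mathbf{x}_2)\le\rho_1$. Bob picks $\omega_1=(\mathbf{x}_1,\rho_1)$; then Alice and Bob alternately pick $\omega_k'=(\mathbf{x}_k',\rho_k')\le_s\omega_k$ and $\omega_{k+1}\le_s\omega_k'$, centers in $K$, with $\rho_k'=\alpha\rho_k$, $\rho_{k+1}=\beta\rho_k'$. The nested balls intersect in one point $\mathbf{x}_\infty$; Alice wins if $\mathbf{x}_\infty\in S$. $S$ is $(\alpha,\beta)$-winning on $K$ if Alice has a strategy guaranteeing $\mathbf{x}_\infty\in S\cap K$, and $\alpha$-winning on $K$ if this holds for every $\beta\in(0,1)$. A locally finite Borel measure $\mu$ on $\mathbb{R}^n$ is $(C,\gamma)$-absolutely decaying if there is $\rho_0>0$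 with $\mu(B(\mathbf{x},\rho)\cap\mathcal L^{(\varepsilon)})<C(\varepsilon/\rho)^\gamma\mu(B(\mathbf{x},\rho))$ for every affine hyperplane $\mathcal L$, $\mathbf{x}\in\operatorname{supp}\mu$, $0<\rho<\rho_0$, $\varepsilon>0$ (closed Euclidean balls; $\mathcal L^{(\varepsilon)}$ the closed $\varepsilon$-neighborhood of $\mathcal L$). *)

theory Defs
  imports "HOL-Analysis.Analysis"
begin

text \<open>A ball is encoded as a pair (center, radius); its points (in K) are
  {x' \<in> K. dist x x' \<le> \<rho>}.\<close>

definition le_s :: "('a::metric_space \<times> real) \<Rightarrow> ('a \<times> real) \<Rightarrow> bool" where
  "le_s w2 w1 \<longleftrightarrow> snd w2 + dist (fst w1) (fst w2) \<le> snd w1"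

definition bob_legal ::
  "'a::metric_space set \<Rightarrow> real \<Rightarrow> real \<Rightarrow> (nat \<Rightarrow> 'a \<times> real) \<Rightarrow> (nat \<Rightarrow> 'a \<times> real) \<Rightarrow> nat \<Rightarrow> bool" where
  "bob_legal K \<alpha> \<beta> \<omega> A k \<longleftrightarrow>
     fst (\<omega> 0) \<in> K \<and> snd (\<omega> 0) > 0 \<and>
     (\<forall>j<k. fst (\<omega> (Suc j)) \<in> K \<and> snd (\<omega> (Suc j)) = \<beta> * snd (A j) \<and> le_s (\<omega> (Suc j)) (A j))"

text \<open>Schmidt's (alpha,beta)-game on K: Alice's strategy maps the history of
  Bob's moves omega_1..omega_k to her move omega'_k (her own earlier moves are
  determined by the strategy).\<close>
definition alpha_beta_winning :: "'a::metric_space set \<Rightarrow> real \<Rightarrow> real \<Rightarrow> 'a set \<Rightarrow> bool" where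
  "alpha_beta_winning K \<alpha> \<beta> S \<longleftrightarrow>
    (\<exists>\<sigma> :: ('a \<times> real) list \<Rightarrow> 'a \<times> real.
      \<forall>\<omega> :: nat \<Rightarrow> 'a \<times> real.
        (\<forall>k. bob_legal K \<alpha> \<beta> \<omega> (\<lambda>j. \<sigma> (map \<omega> [0..<Suc j])) k \<longrightarrow>
             (let a = \<sigma> (map \<omega> [0..<Suc k]) in
               fst a \<in> K \<and> snd a = \<alpha> * snd (\<omega> k) \<and> le_s a (\<omega> k))) \<and>
        ((\<forall>k. bob_legal K \<alpha> \<beta> \<omega> (\<lambda>j. \<sigma> (map \<omega> [0..<Suc j])) k) \<longrightarrow>
             (\<forall>x\<in>K. (\<forall>k. dist (fst (\<omega> k)) x \<le> snd (\<omega> k)) \<longrightarrow> x \<in> S)))"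

definition alpha_winning :: "'a::metric_space set \<Rightarrow> real \<Rightarrow> 'a set \<Rightarrow> bool" where
  "alpha_winning K \<alpha> S \<longleftrightarrow> (\<forall>\<beta>. 0 < \<beta> \<and> \<beta> < 1 \<longrightarrow> alpha_beta_winning K \<alpha> \<beta> S)"

definition affine_hyperplane :: "'a::euclidean_space set \<Rightarrow> bool" where
  "affine_hyperplane L \<longleftrightarrow> (\<exists>a b. a \<noteq> 0 \<and> L = {y. inner a y = b})"

definition locally_finite_borel :: "'a::euclidean_space measure \<Rightarrow> bool" where
  "locally_finite_borel \<mu> \<longleftrightarrow> sets \<mu> = sets borel \<and>
     (\<forall>x. \<exists>e>0. emeasure \<mu> (ball x e) < \<infinity>)"

definition measure_support :: "'a::euclidean_space measure \<Rightarrow> 'a set" where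
  "measure_support \<mu> = {x. \<forall>e>0. emeasure \<mu> (ball x e) > 0}"

definition abs_decaying :: "'a::euclidean_space measure \<Rightarrow> real \<Rightarrow> real \<Rightarrow> bool" where
  "abs_decaying \<mu> C \<gamma> \<longleftrightarrow> (\<exists>\<rho>0>0. \<forall>L x \<rho> \<epsilon>.
     affine_hyperplane L \<and> x \<in> measure_support \<mu> \<and> 0 < \<rho> \<and> \<rho> < \<rho>0 \<and> \<epsilon> > 0 \<longrightarrow>
     emeasure \<mu> (cball x \<rho> \<inter> {y. infdist y L \<le> \<epsilon>})
       < ennreal (C * (\<epsilon> / \<rho>) powr \<gamma>) * emeasure \<mu> (cball x \<rho>))"

end

theory Submission
  imports Defs "HOL-Library.Nat_Bijection"
begin


lemma support_point:
  fixes \<mu> :: "'a::euclidean_space measure"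
  assumes sets: "sets \<mu> = sets borel" and E: "E \<in> sets borel" and pos: "emeasure \<mu> E > 0"
  shows "\<exists>y\<in>E. y \<in> measure_support \<mu>"
proof (rule ccontr)
  assume "\<not> ?thesis"
  then have "\<forall>y\<in>E. \<exists>e>0. emeasure \<mu> (ball y e) = 0"
    unfolding measure_support_def by (auto simp: not_less)
  define F where "F = {ball y e | y e. e > 0 \<and> emeasure \<mu> (ball y e) = 0}"
  have EF: "E \<subseteq> \<Union>F"
  proof
    fix y assume "y \<in> E"
    then obtain e where "e > 0" "emeasure \<mu> (ball y e) = 0" using \<open>\<forall>y\<in>E. _\<close> by blast
    then have "ball y e \<in> F" unfolding F_def by blast
    then show "y \<in> \<Union>F" using \<open>e > 0\<close> by (meson UnionI centre_in_ball)
  qed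
  obtain F' where F': "F' \<subseteq> F" "countable F'" "\<Union>F' = \<Union>F"
    using Lindelof[of F] unfolding F_def by auto
  have "(\<Union>B\<in>F'. B) \<in> null_sets \<mu>"
  proof (rule null_sets_UN')
    show "countable F'" by fact
    fix B assume "B \<in> F'"
    then obtain y e where "B = ball y e" "emeasure \<mu> B = 0" using F' unfolding F_def by auto
    then show "B \<in> null_sets \<mu>" using sets by (auto simp: null_sets_def)
  qed
  then have "\<Union>F \<in> null_sets \<mu>" using F' by simp
  then have "E \<in> null_sets \<mu>" using EF E sets null_sets_subset by (metis sets.sets_into_space subsetI)
  then show False using pos by (simp add: null_setsD1)
qed

lemma closed_nbhd: "closed {y::'a::euclidean_space. infdist y L \<le> e}"
  using continuous_closed_vimage[of "{..e}" "\<lambda>x. infdist x L"]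
    continuous_infdist[OF continuous_ident, of _ UNIV L]
  by (auto simp: vimage_def)

lemma dodge_exists:
  fixes \<mu> :: "'a::euclidean_space measure"
  assumes sets: "sets \<mu> = sets borel" and C: "C > 0" and g: "\<gamma> > 0"
    and a0: "0 < \<alpha>" and a1: "\<alpha> < 1 / (2 * C powr (1 / \<gamma>) + 1)"
    and dec: "\<forall>L x \<rho> \<epsilon>. affine_hyperplane L \<and> x \<in> measure_support \<mu> \<and> 0 < \<rho> \<and> \<rho> < \<rho>0 \<and> \<epsilon> > 0 \<longrightarrow>
     emeasure \<mu> (cball x \<rho> \<inter> {y. infdist y L \<le> \<epsilon>})
       < ennreal (C * (\<epsilon> / \<rho>) powr \<gamma>) * emeasure \<mu> (cball x \<rho>)"
    and L: "affine_hyperplane L" and x: "x \<in> measure_support \<mu>" and r: "0 < r" "r < \<rho>0"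
  shows "\<exists>y\<in>measure_support \<mu>. \<alpha> * r + dist x y \<le> r \<and> infdist y L > \<alpha> * r"
proof -
  define c where "c = C powr (1 / \<gamma>)"
  have c: "c > 0" using C by (simp add: c_def)
  have d: "0 < 2 * c + 1" using c by simp
  have a1c: "\<alpha> < 1 / (2 * c + 1)" using a1 by (simp add: c_def)
  have ac: "\<alpha> * (2 * c + 1) < 1" using a1c d by (metis pos_less_divide_eq)
  then have a1': "\<alpha> < 1" using a0 c by (smt (verit) mult_less_cancel_left1)
  define R where "R = (1 - \<alpha>) * r"
  define \<epsilon> where "\<epsilon> = R / c"
  have R: "0 < R" "R < \<rho>0" using a0 a1' r by (auto simp: R_def) (smt (verit) mult_left_le_one_le)
  have eps: "\<epsilon> > 0" using R c by (simp add: \<epsilon>_def)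
  have are: "\<alpha> * r < \<epsilon>"
  proof -
    have "\<alpha> * c > 0" using a0 c by simp
    moreover have "\<alpha> * (2 * c + 1) = 2 * (\<alpha> * c) + \<alpha>" by (simp add: algebra_simps)
    ultimately have "\<alpha> * c < 1 - \<alpha>" using ac by linarith
    then have "\<alpha> * c * r < (1 - \<alpha>) * r" using r by simp
    then show ?thesis using c by (simp add: \<epsilon>_def R_def field_simps)
  qed
  have "c powr \<gamma> = C" using C g by (simp add: c_def powr_powr)
  then have one: "C * (\<epsilon> / R) powr \<gamma> = 1" using c C R
    by (simp add: \<epsilon>_def powr_divide)
  define N where "N = {y. infdist y L \<le> \<epsilon>}"
  have lt: "emeasure \<mu> (cball x R \<inter> N) < emeasure \<mu> (cball x R)"
    using dec[rule_format, of L x R \<epsilon>] L x R eps one by (simp add: N_def)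
  have Nb: "N \<in> sets borel" unfolding N_def by (rule borel_closed[OF closed_nbhd])
  define E where "E = cball x R - N"
  have Eb: "E \<in> sets borel" unfolding E_def using Nb by auto
  have "emeasure \<mu> (cball x R) \<le> emeasure \<mu> (cball x R \<inter> N) + emeasure \<mu> E"
  proof -
    have "cball x R = (cball x R \<inter> N) \<union> E" by (auto simp: E_def)
    then show ?thesis using Nb Eb sets
      by (metis emeasure_subadditive borel_closed closed_cball sets.Int)
  qed
  then have "emeasure \<mu> E > 0" using lt by (metis add.right_neutral leD not_gr_zero)
  then obtain y where y: "y \<in> E" "y \<in> measure_support \<mu>"
    using support_point[OF sets Eb] by blast
  then have "dist x y \<le> R" "infdist y L > \<epsilon>" by (auto simp: E_def N_def)
  then show ?thesis using y are by (intro bexI[of _ y]) (auto simp: R_def algebra_simps)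
qed



lemma le_s_trans: "le_s a b \<Longrightarrow> le_s b c \<Longrightarrow> le_s (a::'a::metric_space \<times> real) c"
  unfolding le_s_def
  using dist_triangle[of "fst c" "fst a" "fst b"] by (simp add: dist_commute)

lemma game_combine:
  fixes K :: "'a::metric_space set" and h :: "nat \<Rightarrow> 'a set" and D :: "nat \<Rightarrow> 'a \<times> real \<Rightarrow> 'a \<times> real"
  assumes a: "0 < \<alpha>" "\<alpha> < 1" and b: "0 < \<beta>" "\<beta> < 1"
    and win: "alpha_beta_winning K \<alpha> (\<alpha>*\<beta>*\<beta>) S"
    and Dl: "\<And>i p. fst p \<in> K \<Longrightarrow> 0 < snd p \<Longrightarrow> fst (D i p) \<in> K \<and> snd (D i p) = \<alpha> * snd p \<and> le_s (D i p) p"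
    and Ds: "\<And>i p. fst p \<in> K \<Longrightarrow> 0 < snd p \<Longrightarrow> snd p < \<rho>1 \<Longrightarrow> infdist (fst (D i p)) (h i) > \<alpha> * snd p"
    and r1: "\<rho>1 > 0"
  shows "alpha_beta_winning K \<alpha> \<beta> (S - \<Union>(range h))"
proof -
  define \<beta>' where "\<beta>' = \<alpha>*\<beta>*\<beta>"
  obtain \<sigma>S where \<sigma>S: "\<forall>\<omega>. (\<forall>k. bob_legal K \<alpha> \<beta>' \<omega> (\<lambda>j. \<sigma>S (map \<omega> [0..<Suc j])) k \<longrightarrow>
             (let a = \<sigma>S (map \<omega> [0..<Suc k]) in
               fst a \<in> K \<and> snd a = \<alpha> * snd (\<omega> k) \<and> le_s a (\<omega> k))) \<and>
        ((\<forall>k. bob_legal K \<alpha> \<beta>' \<omega> (\<lambda>j. \<sigma>S (map \<omega> [0..<Suc j])) k) \<longrightarrow>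
             (\<forall>x\<in>K. (\<forall>k. dist (fst (\<omega> k)) x \<le> snd (\<omega> k)) \<longrightarrow> x \<in> S))"
    using win unfolding alpha_beta_winning_def \<beta>'_def by blast
  define \<sigma> where "\<sigma> ws = (if even (length ws - 1)
      then \<sigma>S (map (\<lambda>j. ws ! (2*j)) [0..<Suc ((length ws - 1) div 2)])
      else D (fst (prod_decode ((length ws - 1) div 2))) (ws ! (length ws - 1)))" for ws
  show ?thesis unfolding alpha_beta_winning_def
  proof (intro exI[of _ \<sigma>] allI)
    fix \<omega> :: "nat \<Rightarrow> 'a \<times> real"
    define A where "A = (\<lambda>j. \<sigma> (map \<omega> [0..<Suc j]))"
    define \<omega>' where "\<omega>' = (\<lambda>i. \<omega> (2*i))"
    define A' where "A' = (\<lambda>m. \<sigma>S (map \<omega>' [0..<Suc m]))"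
    have Aev: "A (2*m) = A' m" for m
    proof -
      have M: "map (\<lambda>j. map \<omega> [0..<Suc (2*m)] ! (2*j)) [0..<Suc m] = map \<omega>' [0..<Suc m]"
        by (rule map_cong) (auto simp: \<omega>'_def simp del: upt_Suc)
      have "A (2*m) = \<sigma>S (map (\<lambda>j. map \<omega> [0..<Suc (2*m)] ! (2*j)) [0..<Suc m])"
        unfolding A_def \<sigma>_def by (simp del: upt_Suc)
      then show ?thesis by (simp only: M A'_def)
    qed
    have Aod: "A (Suc (2*m)) = D (fst (prod_decode m)) (\<omega> (Suc (2*m)))" for m
      unfolding A_def \<sigma>_def by (simp del: upt_Suc)
    define AL where "AL j \<longleftrightarrow> fst (A j) \<in> K \<and> snd (A j) = \<alpha> * snd (\<omega> j) \<and> le_s (A j) (\<omega> j)" for j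
    let ?BL = "bob_legal K \<alpha> \<beta> \<omega> A"
    let ?BL' = "bob_legal K \<alpha> \<beta>' \<omega>' A'"
    have BL_mono: "?BL j" if "?BL k" "j \<le> k" for j k using that by (auto simp: bob_legal_def)
    have even_case: "?BL' m" if BL: "?BL (2*m)" and AL: "\<forall>j<2*m. AL j" for m
      unfolding bob_legal_def
    proof (intro conjI allI impI)
      show "fst (\<omega>' 0) \<in> K" "0 < snd (\<omega>' 0)" using BL by (auto simp: bob_legal_def \<omega>'_def)
      fix j assume j: "j < m"
      have 1: "fst (\<omega> (Suc (Suc (2*j)))) \<in> K" "snd (\<omega> (Suc (Suc (2*j)))) = \<beta> * snd (A (Suc (2*j)))"
          "le_s (\<omega> (Suc (Suc (2*j)))) (A (Suc (2*j)))"
        using BL j unfolding bob_legal_def by (auto dest!: spec[of _ "Suc (2*j)"])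
      have 2: "snd (\<omega> (Suc (2*j))) = \<beta> * snd (A (2*j))" "le_s (\<omega> (Suc (2*j))) (A (2*j))"
        using BL j unfolding bob_legal_def by (auto dest!: spec[of _ "2*j"])
      have 3: "AL (Suc (2*j))" using AL j by auto
      have e: "\<omega>' (Suc j) = \<omega> (Suc (Suc (2*j)))" by (simp add: \<omega>'_def)
      show "fst (\<omega>' (Suc j)) \<in> K" using 1 e by simp
      show "snd (\<omega>' (Suc j)) = \<beta>' * snd (A' j)"
        using 1 2 3 e Aev[of j] by (simp add: AL_def \<beta>'_def)
      show "le_s (\<omega>' (Suc j)) (A' j)"
        using 1 2 3 e Aev[of j] unfolding AL_def by (metis le_s_trans)
    qed
    have sleg: "AL (2*m)" if "?BL' m" for m
    proof -
      have "let a = \<sigma>S (map \<omega>' [0..<Suc m]) in fst a \<in> K \<and> snd a = \<alpha> * snd (\<omega>' m) \<and> le_s a (\<omega>' m)"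
        using \<sigma>S[rule_format, of \<omega>'] that unfolding A'_def by blast
      then show ?thesis using Aev[of m] unfolding AL_def A'_def Let_def by (simp add: \<omega>'_def)
    qed
    have inv: "\<forall>j\<le>k. 0 < snd (\<omega> j) \<and> AL j" if "?BL k" for k
      using that
    proof (induction k)
      case 0
      have "0 < snd (\<omega> 0)" using 0 by (simp add: bob_legal_def)
      moreover have "AL 0" using sleg[of 0] even_case[of 0] 0 by simp
      ultimately show ?case by simp
    next
      case (Suc k)
      have IH: "\<forall>j\<le>k. 0 < snd (\<omega> j) \<and> AL j" using Suc BL_mono[of "Suc k" k] by simp
      have k: "fst (\<omega> (Suc k)) \<in> K" "snd (\<omega> (Suc k)) = \<beta> * snd (A k)"
        using Suc.prems unfolding bob_legal_def by auto
      have pos: "0 < snd (\<omega> (Suc k))" using k IH a b by (simp add: AL_def)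
      have "AL (Suc k)"
      proof (cases "even (Suc k)")
        case True
        then obtain m where m: "Suc k = 2*m" by (metis dvdE)
        have "\<forall>j<2*m. AL j" using IH m by auto
        then show ?thesis using sleg[of m] even_case[of m] Suc.prems m by simp
      next
        case False
        then obtain m where m: "Suc k = Suc (2*m)" by (metis oddE add.commute plus_1_eq_Suc)
        show ?thesis using Dl[of "\<omega> (Suc k)"] k pos Aod[of m] m by (simp add: AL_def)
      qed
      then show ?case using IH pos by (auto simp: le_Suc_eq)
    qed
    have Aeq: "(\<lambda>j. \<sigma> (map \<omega> [0..<Suc j])) = A" by (simp add: A_def)
    show "(\<forall>k. bob_legal K \<alpha> \<beta> \<omega> (\<lambda>j. \<sigma> (map \<omega> [0..<Suc j])) k \<longrightarrow>
             (let a = \<sigma> (map \<omega> [0..<Suc k]) in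
               fst a \<in> K \<and> snd a = \<alpha> * snd (\<omega> k) \<and> le_s a (\<omega> k))) \<and>
        ((\<forall>k. bob_legal K \<alpha> \<beta> \<omega> (\<lambda>j. \<sigma> (map \<omega> [0..<Suc j])) k) \<longrightarrow>
             (\<forall>x\<in>K. (\<forall>k. dist (fst (\<omega> k)) x \<le> snd (\<omega> k)) \<longrightarrow> x \<in> S - \<Union>(range h)))"
      unfolding Aeq
    proof (intro conjI impI allI ballI)
      fix k assume "?BL k"
      then have "AL k" using inv by blast
      then show "let a = \<sigma> (map \<omega> [0..<Suc k]) in fst a \<in> K \<and> snd a = \<alpha> * snd (\<omega> k) \<and> le_s a (\<omega> k)"
        by (simp add: AL_def A_def Let_def)
    next
      fix x assume all: "\<forall>k. ?BL k" and x: "x \<in> K" and dx: "\<forall>k. dist (fst (\<omega> k)) x \<le> snd (\<omega> k)"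
      have ALL: "0 < snd (\<omega> j) \<and> AL j" for j using inv all by blast
      have BL': "?BL' m" for m using even_case[of m] all ALL by blast
      have "x \<in> S"
        using \<sigma>S[rule_format, of \<omega>'] BL' x dx unfolding A'_def \<omega>'_def by blast
      moreover have "x \<notin> h i" for i
      proof
        assume xh: "x \<in> h i"
        have rad: "snd (\<omega> j) = snd (\<omega> 0) * (\<alpha>*\<beta>)^j" for j
        proof (induction j)
          case (Suc j)
          have "snd (\<omega> (Suc j)) = \<beta> * snd (A j)" using all[rule_format, of "Suc j"] by (simp add: bob_legal_def)
          then show ?case using Suc ALL[of j] by (simp add: AL_def)
        qed simp
        have r0: "0 < snd (\<omega> 0)" using ALL by blast
        obtain n where n: "(\<alpha>*\<beta>)^n < \<rho>1 / snd (\<omega> 0)"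
          using real_arch_pow_inv[of "\<rho>1 / snd (\<omega> 0)" "\<alpha>*\<beta>"] r1 r0 a b
          by (smt (verit) divide_pos_pos mult_less_cancel_left1)
        define m where "m = prod_encode (i, n)"
        have mi: "fst (prod_decode m) = i" by (simp add: m_def)
        have "n \<le> Suc (2*m)" using le_prod_encode_2[of n i] by (simp add: m_def)
        then have "(\<alpha>*\<beta>)^(Suc (2*m)) \<le> (\<alpha>*\<beta>)^n" using a b
          by (intro power_decreasing) (auto simp: mult_le_one)
        then have "snd (\<omega> (Suc (2*m))) < \<rho>1"
          using rad[of "Suc (2*m)"] n r0 by (smt (verit, best) mult_left_mono pos_less_divide_eq mult.commute)
        then have inf: "infdist (fst (A (Suc (2*m)))) (h i) > \<alpha> * snd (\<omega> (Suc (2*m)))"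
          using Ds[of "\<omega> (Suc (2*m))" i] ALL[of "Suc (2*m)"] all[rule_format, of "Suc (Suc (2*m))"] Aod[of m] mi
          by (auto simp: bob_legal_def)
        have l: "le_s (\<omega> (Suc (Suc (2*m)))) (A (Suc (2*m)))"
          using all[rule_format, of "Suc (Suc (2*m))"] by (simp add: bob_legal_def)
        have "dist (fst (A (Suc (2*m)))) x \<le> \<alpha> * snd (\<omega> (Suc (2*m)))"
          using l ALL[of "Suc (2*m)"] dx[rule_format, of "Suc (Suc (2*m))"]
            dist_triangle[of "fst (A (Suc (2*m)))" x "fst (\<omega> (Suc (Suc (2*m))))"]
          unfolding le_s_def AL_def by linarith
        moreover have "infdist (fst (A (Suc (2*m)))) (h i) \<le> dist (fst (A (Suc (2*m)))) x"
          using xh by (rule infdist_le)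
        ultimately show False using inf by linarith
      qed
      ultimately show "x \<in> S - \<Union>(range h)" by auto
    qed
  qed
qed


theorem corollary3p3:
  fixes \<mu> :: "'a::euclidean_space measure" and C \<gamma> \<alpha> :: real
    and S S' :: "'a set" and H :: "'a set set"
  assumes "locally_finite_borel \<mu>"
    and "C > 0" and "\<gamma> > 0"
    and "abs_decaying \<mu> C \<gamma>"
    and "0 < \<alpha>" and "\<alpha> < 1 / (2 * C powr (1 / \<gamma>) + 1)"
    and "alpha_winning (measure_support \<mu>) \<alpha> S"
    and "countable H" and "\<forall>L\<in>H. affine_hyperplane L"
    and "S' = S \<inter> \<Union>H"
  shows "alpha_winning (measure_support \<mu>) \<alpha> (S - S')"
proof (cases "H = {}")
  case True
  then show ?thesis using assms by simp
next
  case False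
  define K where "K = measure_support \<mu>"
  have sets: "sets \<mu> = sets borel" using assms(1) by (simp add: locally_finite_borel_def)
  define h where "h = from_nat_into H"
  have rh: "range h = H" using False assms(8) by (simp add: h_def)
  have eqS: "S - S' = S - \<Union>(range h)" using rh assms(10) by auto
  obtain \<rho>0 where r0: "\<rho>0 > 0" and dec: "\<forall>L x \<rho> \<epsilon>. affine_hyperplane L \<and> x \<in> measure_support \<mu> \<and> 0 < \<rho> \<and> \<rho> < \<rho>0 \<and> \<epsilon> > 0 \<longrightarrow>
     emeasure \<mu> (cball x \<rho> \<inter> {y. infdist y L \<le> \<epsilon>})
       < ennreal (C * (\<epsilon> / \<rho>) powr \<gamma>) * emeasure \<mu> (cball x \<rho>)"
    using assms(4) unfolding abs_decaying_def by blast
  have a1: "\<alpha> < 1"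
  proof -
    have "0 < C powr (1 / \<gamma>)" using assms(2) by simp
    then have "1 < 2 * C powr (1 / \<gamma>) + 1" by simp
    then have "1 / (2 * C powr (1 / \<gamma>) + 1) < 1" by (metis divide_less_eq_1_pos less_trans zero_less_one)
    then show ?thesis using assms(6) by linarith
  qed
  define P where "P i p y \<longleftrightarrow> y \<in> K \<and> \<alpha> * snd p + dist (fst p) y \<le> snd p \<and> infdist y (h i) > \<alpha> * snd p"
    for i and p :: "'a \<times> real" and y
  define D where "D i p = (if \<exists>y. P i p y then (SOME y. P i p y) else fst p, \<alpha> * snd p)" for i p
  have Dl: "fst (D i p) \<in> K \<and> snd (D i p) = \<alpha> * snd p \<and> le_s (D i p) p"
    if "fst p \<in> K" "0 < snd p" for i p
  proof (cases "\<exists>y. P i p y")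
    case True
    define y0 where "y0 = (SOME y. P i p y)"
    have "P i p y0" unfolding y0_def using True by (rule someI_ex)
    then have Q: "y0 \<in> K" "\<alpha> * snd p + dist (fst p) y0 \<le> snd p" unfolding P_def by auto
    have "D i p = (y0, \<alpha> * snd p)" using True by (simp add: D_def y0_def)
    then show ?thesis using Q by (simp add: le_s_def)
  next
    case False
    then show ?thesis using that a1 by (simp add: D_def le_s_def)
  qed
  have Ds: "infdist (fst (D i p)) (h i) > \<alpha> * snd p"
    if "fst p \<in> K" "0 < snd p" "snd p < \<rho>0" for i p
  proof -
    have L: "affine_hyperplane (h i)" using rh assms(9) by auto
    have "\<exists>y. P i p y"
      using dodge_exists[OF sets assms(2,3,5,6) dec L, of "fst p" "snd p"] that
      unfolding P_def K_def by blast
    define y0 where "y0 = (SOME y. P i p y)"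
    have "P i p y0" unfolding y0_def using \<open>\<exists>y. P i p y\<close> by (rule someI_ex)
    then have Q: "infdist y0 (h i) > \<alpha> * snd p" unfolding P_def by auto
    have "D i p = (y0, \<alpha> * snd p)" using \<open>\<exists>y. P i p y\<close> by (simp add: D_def y0_def)
    then show ?thesis using Q by simp
  qed
  show ?thesis unfolding alpha_winning_def eqS K_def[symmetric]
  proof (intro allI impI)
    fix \<beta> :: real assume b: "0 < \<beta> \<and> \<beta> < 1"
    have "0 < \<alpha>*\<beta>*\<beta>" using b assms(5) by simp
    moreover have "\<alpha>*\<beta>*\<beta> < 1" using b assms(5) a1
      by (smt (verit) mult_less_cancel_left1 mult_pos_pos)
    ultimately have win: "alpha_beta_winning K \<alpha> (\<alpha>*\<beta>*\<beta>) S"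
      using assms(7) unfolding alpha_winning_def K_def by blast
    show "alpha_beta_winning K \<alpha> \<beta> (S - \<Union>(range h))"
      by (rule game_combine[OF assms(5) a1 _ _ win Dl Ds r0]) (use b in auto)
  qed
qed

end
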